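(* Let $r=[r_0,\ldots,r_m]$ and $c=[c_0,\ldots,c_n]$ be strictly increasing sequences of nonnegative integers with $r_0\le c_n$, and let $\{\hat r,\hat c\}$ be an ordered sub-pair of $\{r,c\}$ of length $p+1\ge 1$, $\hat c=[\hat c_0,\ldots,\hat c_p]$. Let $A$ be the $(m+1)\times(p+1)$ real matrix with entries $$A_{i,j}=\frac{1}{r_i!}\,\frac{d^{r_i}}{dx^{r_i}}\big(x^{\hat c_j}\big)\Big|_{x=1},\qquad 0\le i\le m,\ 0\le j\le p.$$ Then $A$ has full column rank $p+1$.
   Context: A pair $\{\hat r,\hat c\}$ is an ordered sub-pair of $\{r,c\}$ of length $p+1$ if $\hat r=[\hat r_0,\ldots,\hat r_p]$ is a subsequence of $r$, $\hat c=[\hat c_0,\ldots,\hat c_p]$ is a subsequence of $c$, and $\hat r_i\le \hat c_i$ for all $i=0,\ldots,p$. (Note $A_{i,j}=\binom{\hat c_j}{r_i}$, with $\binom{a}{b}:=0$ for $b>a$.) *)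

theory Defs
  imports "HOL-Analysis.Analysis" "HOL-Library.Sublist" "Jordan_Normal_Form.DL_Rank"
begin

definition ordered_subpair :: "nat list \<Rightarrow> nat list \<Rightarrow> nat list \<Rightarrow> nat list \<Rightarrow> bool" where
  "ordered_subpair rh ch r c \<longleftrightarrow>
     subseq rh r \<and> subseq ch c \<and> length rh = length ch \<and>
     (\<forall>i < length rh. rh ! i \<le> ch ! i)"

definition entryA :: "nat \<Rightarrow> nat \<Rightarrow> real" where
  "entryA k e = ((deriv ^^ k) (\<lambda>x::real. x ^ e) 1) / fact k"

definition matA :: "nat list \<Rightarrow> nat list \<Rightarrow> real mat" where
  "matA r ch = mat (length r) (length ch) (\<lambda>(i, j). entryA (r ! i) (ch ! j))"

end

theory Submission
  imports Defs
begin

lemma choose_step: "(e choose k) * (e - k) = (e choose Suc k) * Suc k"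
  by (metis binomial_absorb_comp binomial_absorption mult.commute)

lemma deriv_pow_iter: "(deriv ^^ k) (\<lambda>x::real. x ^ e) = (\<lambda>x. real (e choose k) * fact k * x ^ (e - k))"
proof (induction k)
  case 0
  then show ?case by simp
next
  case (Suc k)
  have "(deriv ^^ Suc k) (\<lambda>x::real. x ^ e) = deriv (\<lambda>x. real (e choose k) * fact k * x ^ (e - k))"
    using Suc by simp
  also have "\<dots> = (\<lambda>x. real (e choose k) * fact k * (real (e - k) * x ^ (e - k - 1)))"
  proof
    fix x :: real
    show "deriv (\<lambda>x. real (e choose k) * fact k * x ^ (e - k)) x = real (e choose k) * fact k * (real (e - k) * x ^ (e - k - 1))"
      by (rule DERIV_imp_deriv) (auto intro!: derivative_eq_intros)
  qed
  also have "\<dots> = (\<lambda>x. real (e choose Suc k) * fact (Suc k) * x ^ (e - Suc k))"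
  proof
    fix x :: real
    have "real ((e choose k) * (e - k)) = real ((e choose Suc k) * Suc k)"
      using choose_step by metis
    hence "real (e choose k) * real (e - k) = real (e choose Suc k) * real (Suc k)"
      by (simp only: of_nat_mult)
    hence h: "real (e choose k) * real (e - k) = real (e choose Suc k) * real (Suc k)" .
    have "real (e choose k) * fact k * (real (e - k) * x ^ (e - k - 1)) = (real (e choose k) * real (e - k)) * (fact k * x ^ (e - Suc k))"
      by (simp add: mult_ac)
    also have "\<dots> = real (e choose Suc k) * (real (Suc k) * fact k) * x ^ (e - Suc k)"
      unfolding h by (simp add: mult_ac)
    finally show "real (e choose k) * fact k * (real (e - k) * x ^ (e - k - 1)) = real (e choose Suc k) * fact (Suc k) * x ^ (e - Suc k)"
      by (simp add: fact_Suc)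
  qed
  finally show ?case .
qed

lemma entryA_eq: "entryA k e = real (e choose k)"
  unfolding entryA_def deriv_pow_iter by simp

lemma det_scale:
  fixes e :: "nat \<Rightarrow> nat \<Rightarrow> real"
  shows "det (mat n n (\<lambda>(i,j). a i * b j * e i j)) = prod a {0..<n} * prod b {0..<n} * det (mat n n (\<lambda>(i,j). e i j))"
proof -
  have "det (mat n n (\<lambda>(i,j). a i * b j * e i j)) =
     (\<Sum>p | p permutes {0..<n}. of_int (sign p) * (\<Prod>i = 0..<n. a i * b (p i) * e i (p i)))"
    by (subst det_def'[of _ n], simp, intro sum.cong refl prod.cong, auto simp: permutes_def)
  also have "\<dots> = (\<Sum>p | p permutes {0..<n}. prod a {0..<n} * prod b {0..<n} * (of_int (sign p) * (\<Prod>i = 0..<n. e i (p i))))"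
  proof (rule sum.cong[OF refl])
    fix p assume "p \<in> {p. p permutes {0..<n}}"
    hence p: "p permutes {0..<n}" by simp
    have "(\<Prod>i = 0..<n. b (p i)) = prod b {0..<n}"
      using prod.permute[OF p, of b] by (simp add: comp_def)
    thus "of_int (sign p) * (\<Prod>i = 0..<n. a i * b (p i) * e i (p i)) = prod a {0..<n} * prod b {0..<n} * (of_int (sign p) * (\<Prod>i = 0..<n. e i (p i)))"
      by (simp add: prod.distrib)
  qed
  also have "\<dots> = prod a {0..<n} * prod b {0..<n} * det (mat n n (\<lambda>(i,j). e i j))"
    by (subst det_def'[of _ n], simp, subst sum_distrib_left, intro sum.cong refl arg_cong2[where f="(*)"] prod.cong, auto simp: permutes_def)
  finally show ?thesis .
qed

definition NM :: "nat list \<Rightarrow> (nat \<Rightarrow> nat) \<Rightarrow> real mat" where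
  "NM R g = mat (length R) (length R) (\<lambda>(j,i). real (g j choose R!i))"

lemma row_zero_det:
  fixes A :: "real mat"
  assumes "A \<in> carrier_mat n n" "k < n" "\<And>i. i < n \<Longrightarrow> A $$ (k,i) = 0"
  shows "det A = 0"
  using laplace_expansion_row[OF assms(1,2)] assms(3) by simp

lemma telescope: "(\<Sum>k\<le>(j::nat). (if k = 0 then f 0 else f k - f (k-1))) = (f j :: real)"
  by (induction j) auto

lemma hockey:
  assumes "a \<le> b" "0 < r"
  shows "real (b choose r) - real (a choose r) = (\<Sum>t\<in>{a..<b}. real (t choose (r - 1)))"
  using assms(1)
proof (induction b rule: dec_induct)
  case base
  then show ?case by simp
next
  case (step b)
  obtain r' where r: "r = Suc r'" using assms(2) gr0_implies_Suc by blast
  have "real (Suc b choose r) = real (b choose r') + real (b choose r)"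
    unfolding r binomial_Suc_Suc by simp
  then show ?case using step by (simp add: r)
qed

lemma sum_list_pred_le: "sum_list (map (\<lambda>x. x - 1) xs) \<le> sum_list (xs :: nat list)"
  by (induction xs) auto

lemma sum_list_pred_less: "xs \<noteq> [] \<Longrightarrow> (\<forall>x\<in>set xs. 1 \<le> x) \<Longrightarrow> sum_list (map (\<lambda>x. x - 1) xs) < sum_list (xs :: nat list)"
proof (induction xs)
  case Nil
  then show ?case by simp
next
  case (Cons a xs)
  then show ?case using sum_list_pred_le[of xs] by auto
qed

lemma zero_case:
  assumes n: "length R = Suc n'" and R0: "R!0 = 0" and sorted: "sorted_wrt (<) R"
    and incr: "\<And>j. j < n' \<Longrightarrow> g j \<le> g (Suc j)"
  shows "det (NM R g) = det (mat n' n' (\<lambda>(j,i). \<Sum>t\<in>{g j..<g (Suc j)}. real (t choose (R!(Suc i) - 1))))"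
proof -
  define N where "N = Suc n'"
  define B where "B = mat N N (\<lambda>(j,i). if j = 0 then real (g 0 choose R!i) else real (g j choose R!i) - real (g (j-1) choose R!i))"
  define T where "T = mat N N (\<lambda>(j,k). if k \<le> j then 1 else (0::real))"
  have B: "B \<in> carrier_mat N N" and T: "T \<in> carrier_mat N N" unfolding B_def T_def by auto
  have "NM R g = T * B"
  proof (rule eq_matI)
    fix j i assume j: "j < dim_row (T * B)" and i: "i < dim_col (T * B)"
    hence jN: "j < N" and iN: "i < N" using B T by auto
    have "(T * B) $$ (j, i) = (\<Sum>k\<in>{0..<N}. T $$ (j,k) * B $$ (k,i))"
      using jN iN B T by (simp add: scalar_prod_def)
    also have "\<dots> = (\<Sum>k\<in>{0..<N}. if k \<le> j then B $$ (k,i) else 0)"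
      using jN by (intro sum.cong refl) (auto simp: T_def)
    also have "\<dots> = (\<Sum>k\<in>{0..<N} \<inter> {k. k \<le> j}. B $$ (k,i))"
      by (simp add: sum.inter_restrict)
    also have "{0..<N} \<inter> {k. k \<le> j} = {..j}" using jN by auto
    also have "(\<Sum>k\<le>j. B $$ (k,i)) = (\<Sum>k\<le>j. (if k = 0 then real (g 0 choose R!i) else real (g k choose R!i) - real (g (k-1) choose R!i)))"
      using jN iN by (intro sum.cong refl) (auto simp: B_def)
    also have "\<dots> = real (g j choose R!i)" by (rule telescope)
    finally show "NM R g $$ (j, i) = (T * B) $$ (j, i)"
      using jN iN n by (simp add: NM_def N_def)
  qed (use B T n in \<open>auto simp: NM_def N_def\<close>)
  hence "det (NM R g) = det T * det B" using det_mult[OF T B] by simp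
  also have "det T = 1"
    using det_lower_triangular[OF _ T] by (simp add: T_def prod_list_diag_prod)
  also have "det B = (\<Sum>i<N. B $$ (i,0) * cofactor B i 0)"
    by (rule laplace_expansion_column[OF B]) (simp add: N_def)
  also have "\<dots> = cofactor B 0 0"
  proof -
    have "\<And>i. i < n' \<Longrightarrow> B $$ (Suc i, 0) = 0" using R0 by (simp add: B_def N_def)
    moreover have "B $$ (0,0) = 1" using R0 by (simp add: B_def N_def)
    ultimately show ?thesis unfolding N_def sum.lessThan_Suc_shift by simp
  qed
  also have "cofactor B 0 0 = det (mat_delete B 0 0)" by (simp add: cofactor_def)
  also have "mat_delete B 0 0 = mat n' n' (\<lambda>(j,i). \<Sum>t\<in>{g j..<g (Suc j)}. real (t choose (R!(Suc i) - 1)))"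
  proof (rule eq_matI)
    fix j i assume j: "j < dim_row (mat n' n' (\<lambda>(j,i). \<Sum>t\<in>{g j..<g (Suc j)}. real (t choose (R!(Suc i) - 1))))"
      and i: "i < dim_col (mat n' n' (\<lambda>(j,i). \<Sum>t\<in>{g j..<g (Suc j)}. real (t choose (R!(Suc i) - 1))))"
    hence j: "j < n'" and i: "i < n'" by auto
    have pos: "0 < R!(Suc i)"
      using sorted_wrt_nth_less[OF sorted, of 0 "Suc i"] i n R0 by simp
    have "mat_delete B 0 0 $$ (j,i) = B $$ (Suc j, Suc i)"
      using i j B by (simp add: mat_delete_def N_def)
    also have "\<dots> = real (g (Suc j) choose R!(Suc i)) - real (g j choose R!(Suc i))"
      using i j by (simp add: B_def N_def)
    also have "\<dots> = (\<Sum>t\<in>{g j..<g (Suc j)}. real (t choose (R!(Suc i) - 1)))"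
      by (rule hockey[OF incr[OF j] pos])
    finally show "mat_delete B 0 0 $$ (j,i) = mat n' n' (\<lambda>(j,i). \<Sum>t\<in>{g j..<g (Suc j)}. real (t choose (R!(Suc i) - 1))) $$ (j,i)"
      using i j by simp
  qed (use B in \<open>auto simp: N_def\<close>)
  finally show ?thesis by simp
qed

lemma expand:
  fixes g :: "nat \<Rightarrow> nat" and R' :: "nat list" and n :: nat
  defines "S \<equiv> (\<Union>j\<in>{0..<n}. {g j..<g (Suc j)})"
  defines "F \<equiv> {f. (\<forall>i\<in>{0..<n}. f i \<in> S) \<and> (\<forall>i. i \<notin> {0..<n} \<longrightarrow> f i = i)}"
  shows "det (mat n n (\<lambda>(j,i). \<Sum>t\<in>{g j..<g (Suc j)}. real (t choose R'!i))) =
    (\<Sum>f\<in>F. det (mat n n (\<lambda>(j,i). if f j \<in> {g j..<g (Suc j)} then real (f j choose R'!i) else 0)))"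
proof -
  define a where "a = (\<lambda>j t. vec n (\<lambda>i. if t \<in> {g j..<g (Suc j)} then real (t choose R'!i) else 0))"
  have fS: "finite S" unfolding S_def by auto
  have a: "a \<in> {0..<n} \<rightarrow> S \<rightarrow> carrier_vec n" unfolding a_def by auto
  have "mat n n (\<lambda>(j,i). \<Sum>t\<in>{g j..<g (Suc j)}. real (t choose R'!i)) = mat\<^sub>r n n (\<lambda> j. finsum_vec TYPE(real) n (a j) S)"
  proof (rule eq_matI)
    fix j i assume "j < dim_row (mat\<^sub>r n n (\<lambda> j. finsum_vec TYPE(real) n (a j) S))"
      "i < dim_col (mat\<^sub>r n n (\<lambda> j. finsum_vec TYPE(real) n (a j) S))"
    hence j: "j < n" and i: "i < n" by auto
    have sub: "{g j..<g (Suc j)} \<subseteq> S" using j unfolding S_def by auto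
    have "mat\<^sub>r n n (\<lambda> j. finsum_vec TYPE(real) n (a j) S) $$ (j,i) = finsum_vec TYPE(real) n (a j) S $ i"
      using i j by simp
    also have "\<dots> = (\<Sum>t\<in>S. a j t $ i)"
      by (rule index_finsum_vec[OF fS i]) (use a j in auto)
    also have "\<dots> = (\<Sum>t\<in>S. if t \<in> {g j..<g (Suc j)} then real (t choose R'!i) else 0)"
      using i by (simp add: a_def)
    also have "\<dots> = (\<Sum>t\<in>{g j..<g (Suc j)}. real (t choose R'!i))"
    proof -
      have "S \<inter> {t. g j \<le> t \<and> t < g (Suc j)} = {g j..<g (Suc j)}" using sub by auto
      thus ?thesis using fS by (simp add: sum.If_cases)
    qed
    finally show "mat n n (\<lambda>(j,i). \<Sum>t\<in>{g j..<g (Suc j)}. real (t choose R'!i)) $$ (j,i) = mat\<^sub>r n n (\<lambda> j. finsum_vec TYPE(real) n (a j) S) $$ (j,i)"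
      using i j by simp
  qed auto
  also have "det \<dots> = (\<Sum>f\<in>F. det (mat\<^sub>r n n (\<lambda> j. a j (f j))))"
    unfolding F_def by (rule det_linear_rows_sum[OF fS a])
  also have "\<dots> = (\<Sum>f\<in>F. det (mat n n (\<lambda>(j,i). if f j \<in> {g j..<g (Suc j)} then real (f j choose R'!i) else 0)))"
    by (intro sum.cong refl arg_cong[where f=det] eq_matI) (auto simp: a_def)
  finally show ?thesis .
qed

lemma pos_helper: "0 < (a::real) \<Longrightarrow> 0 < b \<Longrightarrow> 0 \<le> d \<and> (Q \<longrightarrow> 0 < d) \<Longrightarrow> 0 \<le> a * b * d \<and> (Q \<longrightarrow> 0 < a * b * d)"
  by simp

lemma sorted_pred: "sorted_wrt (<) xs \<Longrightarrow> (\<forall>x\<in>set xs. 1 \<le> x) \<Longrightarrow> sorted_wrt (<) (map (\<lambda>x. x - 1) (xs :: nat list))"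
  by (induction xs) auto

lemma main:
  "sorted_wrt (<) R \<Longrightarrow> (\<forall>j k. j < k \<longrightarrow> k < length R \<longrightarrow> g j < g k) \<Longrightarrow>
   0 \<le> det (NM R g) \<and> ((\<forall>j<length R. R!j \<le> g j) \<longrightarrow> 0 < det (NM R g))"
proof (induction "length R + sum_list R" arbitrary: R g rule: less_induct)
  case less
  note IH = less.hyps
  note sorted = less.prems(1)
  note incr = less.prems(2)
  show ?case
  proof (cases R)
    case Nil
    then show ?thesis by (simp add: NM_def)
  next
    case (Cons r0 R1)
    define n' where "n' = length R1"
    have lenR: "length R = Suc n'" using Cons n'_def by simp
    have NMc: "NM R g \<in> carrier_mat (Suc n') (Suc n')" using lenR by (simp add: NM_def)
    have R0: "R!0 = r0" using Cons by simp
    show ?thesis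
    proof (cases "r0 = 0")
      case True
      define R' where "R' = map (\<lambda>x. x - 1) R1"
      have lenR': "length R' = n'" unfolding R'_def n'_def by simp
      have R'nth: "\<And>i. i < n' \<Longrightarrow> R'!i = R!(Suc i) - 1" unfolding R'_def n'_def using Cons by simp
      have gle: "\<And>j. j < n' \<Longrightarrow> g j \<le> g (Suc j)" using incr lenR by (simp add: less_imp_le)
      define I where "I = (\<lambda>j. {g j..<g (Suc j)})"
      define S where "S = (\<Union>j\<in>{0..<n'}. {g j..<g (Suc j)})"
      define F where "F = {f. (\<forall>i\<in>{0..<n'}. f i \<in> S) \<and> (\<forall>i. i \<notin> {0..<n'} \<longrightarrow> f i = i)}"
      define M where "M = (\<lambda>f. mat n' n' (\<lambda>(j,i). if f j \<in> {g j..<g (Suc j)} then real (f j choose R'!i) else 0))"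
      have "det (NM R g) = det (mat n' n' (\<lambda>(j,i). \<Sum>t\<in>{g j..<g (Suc j)}. real (t choose (R!(Suc i) - 1))))"
        apply (rule zero_case[OF lenR])
        using R0 True sorted gle by auto
      also have "mat n' n' (\<lambda>(j,i). \<Sum>t\<in>{g j..<g (Suc j)}. real (t choose (R!(Suc i) - 1)))
          = mat n' n' (\<lambda>(j,i). \<Sum>t\<in>{g j..<g (Suc j)}. real (t choose R'!i))"
        by (rule eq_matI) (auto simp: R'nth)
      also have "det \<dots> = (\<Sum>f\<in>F. det (M f))"
        unfolding F_def S_def M_def by (rule expand)
      finally have detsum: "det (NM R g) = (\<Sum>f\<in>F. det (M f))" .
      have fS: "finite S" unfolding S_def by auto
      have fF: "finite F" unfolding F_def using Missing_Misc.finite_bounded_functions[OF fS, of "{0..<n'}"] by auto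
      have measure: "length R' + sum_list R' < length R + sum_list R"
        using lenR lenR' sum_list_pred_le[of R1] Cons by (simp add: R'_def)
      have sortedR': "sorted_wrt (<) R'"
      proof -
        have "sorted_wrt (<) R1" using sorted Cons by simp
        moreover have "\<forall>x\<in>set R1. 1 \<le> x" using sorted Cons True by auto
        ultimately show ?thesis unfolding R'_def by (rule sorted_pred)
      qed
      have good: "0 \<le> det (M f) \<and> ((\<forall>j<n'. R'!j \<le> f j) \<longrightarrow> 0 < det (M f))"
        if fin: "\<forall>j<n'. f j \<in> {g j..<g (Suc j)}" for f
      proof -
        have Mf: "M f = NM R' f"
          by (rule eq_matI) (use fin in \<open>auto simp: M_def NM_def lenR'\<close>)
        have fincr: "\<forall>j k. j < k \<longrightarrow> k < length R' \<longrightarrow> f j < f k"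
        proof (intro allI impI)
          fix j k assume jk: "j < k" and k: "k < length R'"
          have "f j < g (Suc j)" using fin jk k lenR' by auto
          also have "g (Suc j) \<le> g k"
          proof (cases "Suc j = k")
            case False
            thus ?thesis using incr jk k lenR' lenR by (auto intro: less_imp_le)
          qed simp
          also have "g k \<le> f k" using fin k lenR' by auto
          finally show "f j < f k" .
        qed
        show ?thesis unfolding Mf using IH[OF measure sortedR' fincr] lenR' by simp
      qed
      have nonneg: "0 \<le> det (M f)" if "f \<in> F" for f
      proof (cases "\<forall>j<n'. f j \<in> {g j..<g (Suc j)}")
        case True
        then show ?thesis using good by blast
      next
        case False
        then obtain j where j: "j < n'" "f j \<notin> {g j..<g (Suc j)}" by blast
        have "det (M f) = 0"
          by (rule row_zero_det[of _ n' j]) (use j in \<open>auto simp: M_def\<close>)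
        thus ?thesis by simp
      qed
      show ?thesis
      proof
        show "0 \<le> det (NM R g)" unfolding detsum by (rule sum_nonneg) (use nonneg in auto)
        show "(\<forall>j<length R. R ! j \<le> g j) \<longrightarrow> 0 < det (NM R g)"
        proof
          assume le: "\<forall>j<length R. R ! j \<le> g j"
          define fs where "fs = (\<lambda>j. if j < n' then g (Suc j) - 1 else j)"
          have gstrict: "\<And>j. j < n' \<Longrightarrow> g j < g (Suc j)" using incr lenR by simp
          have fsin: "\<forall>j<n'. fs j \<in> {g j..<g (Suc j)}"
          proof (intro allI impI)
            fix j assume "j < n'"
            with gstrict[of j] show "fs j \<in> {g j..<g (Suc j)}" by (auto simp: fs_def)
          qed
          have fsF: "fs \<in> F" using fsin unfolding F_def S_def by (auto simp: fs_def)
          have "\<forall>j<n'. R'!j \<le> fs j"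
          proof (intro allI impI)
            fix j assume j: "j < n'"
            have "R!(Suc j) \<le> g (Suc j)" using le j lenR by simp
            thus "R'!j \<le> fs j" using j by (simp add: R'nth fs_def)
          qed
          hence pos: "0 < det (M fs)" using good[OF fsin] by simp
          also have "det (M fs) \<le> (\<Sum>f\<in>F. det (M f))"
            by (rule member_le_sum[OF fsF]) (use nonneg fF in auto)
          finally show "0 < det (NM R g)" unfolding detsum .
        qed
      qed
    next
      case False
      hence r0pos: "1 \<le> r0" by simp
      have Rpos: "\<And>i. i < Suc n' \<Longrightarrow> 1 \<le> R!i"
      proof -
        fix i assume i: "i < Suc n'"
        show "1 \<le> R!i"
        proof (cases i)
          case 0 thus ?thesis using R0 r0pos by simp
        next
          case (Suc i')
          thus ?thesis using sorted_wrt_nth_less[OF sorted, of 0 i] i lenR R0 r0pos by simp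
        qed
      qed
      show ?thesis
      proof (cases "g 0 = 0")
        case True
        have "det (NM R g) = 0"
        proof (rule row_zero_det[OF NMc, of 0])
          fix i assume i: "i < Suc n'"
          show "NM R g $$ (0, i) = 0" using i lenR Rpos[OF i] True by (simp add: NM_def)
        qed simp
        moreover have "\<not> (R!0 \<le> g 0)" using True R0 r0pos by simp
        ultimately show ?thesis using lenR by auto
      next
        case False
        have gpos: "\<And>j. j < Suc n' \<Longrightarrow> 1 \<le> g j"
        proof -
          fix j assume j: "j < Suc n'"
          show "1 \<le> g j"
          proof (cases j)
            case 0 thus ?thesis using False by simp
          next
            case (Suc j')
            have "g 0 < g j" using incr lenR j Suc by simp
            thus ?thesis by simp
          qed
        qed
        define R2 where "R2 = map (\<lambda>x. x - 1) R"
        define g2 where "g2 = (\<lambda>j. g j - 1)"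
        have lenR2: "length R2 = Suc n'" using lenR by (simp add: R2_def)
        have "NM R g = mat (Suc n') (Suc n') (\<lambda>(j,i). real (g j) * (1 / real (R!i)) * real (g2 j choose R2!i))"
        proof (rule eq_matI)
          fix j i assume "j < dim_row (mat (Suc n') (Suc n') (\<lambda>(j,i). real (g j) * (1 / real (R!i)) * real (g2 j choose R2!i)))"
            "i < dim_col (mat (Suc n') (Suc n') (\<lambda>(j,i). real (g j) * (1 / real (R!i)) * real (g2 j choose R2!i)))"
          hence j: "j < Suc n'" and i: "i < Suc n'" by auto
          have ri: "0 < R!i" using Rpos[OF i] by simp
          have "R!i * (g j choose R!i) = g j * ((g j - 1) choose (R!i - 1))"
            by (rule times_binomial_minus1_eq[OF ri])
          hence "real (R!i) * real (g j choose R!i) = real (g j) * real ((g j - 1) choose (R!i - 1))"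
            by (metis of_nat_mult)
          hence "real (g j choose R!i) = real (g j) * (1 / real (R!i)) * real ((g j - 1) choose (R!i - 1))"
            using ri by (simp add: field_simps)
          thus "NM R g $$ (j,i) = mat (Suc n') (Suc n') (\<lambda>(j,i). real (g j) * (1 / real (R!i)) * real (g2 j choose R2!i)) $$ (j,i)"
            using i j lenR by (simp add: NM_def R2_def g2_def)
        qed (use lenR in \<open>auto simp: NM_def\<close>)
        hence detEq: "det (NM R g) = prod (\<lambda>j. real (g j)) {0..<Suc n'} * prod (\<lambda>i. 1 / real (R!i)) {0..<Suc n'} * det (NM R2 g2)"
          apply (subst (1) NM_def[of R2 g2])
          apply (simp only: lenR2 det_scale)
          done
        have p1: "0 < prod (\<lambda>j. real (g j)) {0..<Suc n'}"
          by (rule prod_pos) (use gpos in force)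
        have p2: "0 < prod (\<lambda>i. 1 / real (R!i)) {0..<Suc n'}"
          by (rule prod_pos) (use Rpos in force)
        have measure: "length R2 + sum_list R2 < length R + sum_list R"
        proof -
          have "sum_list R2 < sum_list R"
          proof -
            have "\<forall>x\<in>set R. 1 \<le> x" using Rpos lenR by (auto simp: in_set_conv_nth)
            moreover have "R \<noteq> []" using Cons by simp
            ultimately show ?thesis unfolding R2_def by (rule sum_list_pred_less[rotated])
          qed
          thus ?thesis using lenR lenR2 by simp
        qed
        have sortedR2: "sorted_wrt (<) R2"
          unfolding R2_def by (rule sorted_pred[OF sorted]) (use Rpos lenR in \<open>auto simp: in_set_conv_nth\<close>)
        have incr2: "\<forall>j k. j < k \<longrightarrow> k < length R2 \<longrightarrow> g2 j < g2 k"
        proof (intro allI impI)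
          fix j k assume jk: "j < k" and k: "k < length R2"
          have "g j < g k" using incr jk k lenR lenR2 by simp
          moreover have "1 \<le> g j" using gpos jk k lenR2 by simp
          ultimately show "g2 j < g2 k" unfolding g2_def by simp
        qed
        note IH2 = IH[OF measure sortedR2 incr2]
        have leq: "(\<forall>j<length R. R ! j \<le> g j) \<longleftrightarrow> (\<forall>j<length R2. R2 ! j \<le> g2 j)"
        proof -
          have "\<And>j. j < Suc n' \<Longrightarrow> (R ! j \<le> g j) \<longleftrightarrow> (R2 ! j \<le> g2 j)"
          proof -
            fix j assume j: "j < Suc n'"
            have "1 \<le> R!j" "1 \<le> g j" using Rpos[OF j] gpos[OF j] .
            thus "(R ! j \<le> g j) \<longleftrightarrow> (R2 ! j \<le> g2 j)" using j lenR by (simp add: R2_def g2_def) arith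
          qed
          thus ?thesis using lenR lenR2 by auto
        qed
        show ?thesis unfolding detEq leq using pos_helper[OF p1 p2 IH2] .
      qed
    qed
  qed
qed

lemma subseq_set_sub: "subseq xs ys \<Longrightarrow> set xs \<subseteq> set ys"
  by (auto elim: list_emb_set)

lemma subseq_sorted: "subseq xs ys \<Longrightarrow> sorted_wrt (<) ys \<Longrightarrow> sorted_wrt (<) (xs :: nat list)"
proof (induction rule: list_emb.induct)
  case (list_emb_Nil ys)
  then show ?case by simp
next
  case (list_emb_Cons xs ys y)
  then show ?case by simp
next
  case (list_emb_Cons2 x y xs ys)
  then show ?case using subseq_set_sub[OF list_emb_Cons2.hyps(2)] by auto
qed

theorem corollary2:
  fixes r c rh ch :: "nat list"
  assumes "r \<noteq> []" and "c \<noteq> []"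
    and "sorted_wrt (<) r" and "sorted_wrt (<) c"
    and "hd r \<le> last c"
    and "ordered_subpair rh ch r c"
    and "ch \<noteq> []"
  shows "vec_space.rank (length r) (matA r ch) = length ch"
proof -
  define p where "p = length ch"
  define A where "A = matA r ch"
  have sub: "subseq rh r" "subseq ch c" "length rh = length ch" "\<forall>i < length rh. rh ! i \<le> ch ! i"
    using assms(6) unfolding ordered_subpair_def by auto
  have A: "A \<in> carrier_mat (length r) p" unfolding A_def matA_def p_def by simp
  have Aent: "\<And>i j. i < length r \<Longrightarrow> j < p \<Longrightarrow> A $$ (i,j) = real (ch!j choose r!i)"
    unfolding A_def matA_def p_def by (simp add: entryA_eq)
  have srh: "sorted_wrt (<) rh" using subseq_sorted[OF sub(1) assms(3)] .
  have sch: "sorted_wrt (<) ch" using subseq_sorted[OF sub(2) assms(4)] .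
  have "\<forall>k<p. \<exists>i. i < length r \<and> r!i = rh!k"
  proof (intro allI impI)
    fix k assume "k < p"
    hence "rh!k \<in> set r" using subseq_set_sub[OF sub(1)] sub(3) p_def by auto
    thus "\<exists>i. i < length r \<and> r!i = rh!k" by (auto simp: in_set_conv_nth)
  qed
  then obtain phi where phi: "\<And>k. k < p \<Longrightarrow> phi k < length r \<and> r!(phi k) = rh!k" by metis
  define B where "B = mat p p (\<lambda>(k,j). A $$ (phi k, j))"
  have B: "B \<in> carrier_mat p p" unfolding B_def by simp
  have BT: "transpose_mat B = NM rh (\<lambda>j. ch!j)"
    by (rule eq_matI) (auto simp: B_def NM_def sub(3) p_def Aent phi)
  have "0 < det (NM rh (\<lambda>j. ch!j))"
    using main[OF srh, of "\<lambda>j. ch!j"] sorted_wrt_nth_less[OF sch] sub(3,4) by auto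
  hence detB: "det B \<noteq> 0" using det_transpose[OF B] BT by simp
  interpret V: vec_space "TYPE(real)" "length r" .
  have dist: "distinct (cols A)"
  proof (rule ccontr)
    assume "\<not> distinct (cols A)"
    then obtain i j where ij: "i \<noteq> j" "cols A ! i = cols A ! j" "i < length (cols A)" "j < length (cols A)"
      using distinct_conv_nth by blast
    hence ij2: "i < p" "j < p" "col A i = col A j" using A by auto
    have "col B i = col B j"
    proof (rule eq_vecI)
      fix k assume "k < dim_vec (col B j)"
      hence k: "k < p" using B by simp
      have "A $$ (phi k, i) = col A i $ phi k" using phi[OF k] ij2(1) A by simp
      also have "\<dots> = col A j $ phi k" by (simp only: ij2(3))
      also have "\<dots> = A $$ (phi k, j)" using phi[OF k] ij2(2) A by simp
      finally show "col B i $ k = col B j $ k" using k ij2 by (simp add: B_def)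
    qed (use B in simp)
    hence "det B = 0" using det_identical_cols[OF B ij(1) ij2(1,2)] by simp
    thus False using detB by simp
  qed
  have indpt: "\<not> V.lin_dep (set (cols A))"
  proof
    assume "V.lin_dep (set (cols A))"
    then obtain v where v: "v \<in> carrier_vec p" "v \<noteq> 0\<^sub>v p" "A *\<^sub>v v = 0\<^sub>v (length r)"
      using V.lin_depE[OF A _ dist] by blast
    have "B *\<^sub>v v = 0\<^sub>v p"
    proof (rule eq_vecI)
      fix k assume "k < dim_vec (0\<^sub>v p :: real vec)"
      hence k: "k < p" by simp
      have rowB: "row B k = row A (phi k)"
        by (rule eq_vecI) (use k phi[OF k] A in \<open>auto simp: B_def\<close>)
      have "(B *\<^sub>v v) $ k = row A (phi k) \<bullet> v" using k B rowB by simp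
      also have "\<dots> = (A *\<^sub>v v) $ phi k" using phi[OF k] A by simp
      also have "\<dots> = 0" using v(3) phi[OF k] by simp
      finally show "(B *\<^sub>v v) $ k = 0\<^sub>v p $ k" using k by simp
    qed (use B in simp)
    hence "det B = 0" using det_0_iff_vec_prod_zero_field[OF B] v by blast
    thus False using detB by simp
  qed
  have "vec_space.rank (length r) A = p"
    by (rule V.lin_indpt_full_rank[OF A dist indpt])
  thus ?thesis unfolding A_def p_def .
qed

end
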